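(* Let $J\ge p\ge 1$ be integers, let $\sigma_\varepsilon^2>0$, let $\mathbf{\Sigma}_\gamma$ be a nonnegative definite symmetric $J\times J$ matrix, let $I>0$, and let $\mathbf{A}_{\bm\beta}$ be a real $J\times p$ matrix (the Jacobian of the mean response at a fixed nominal parameter $\bm\beta$). For an approximate design $\xi=(I_1,\dots,I_J)$ (real $I_j\ge 0$ with $\sum_j I_j=I$) put $\mathbf{M}_0(\xi)=\mathrm{diag}(I_1,\dots,I_J)$, $\mathbf{M}_0(\xi)^{1/2}=\mathrm{diag}(\sqrt{I_1},\dots,\sqrt{I_J})$ and $$\mathbf{M}_{\bm\beta}(\xi)=\mathbf{A}_{\bm\beta}^{\mathrm T}\mathbf{M}_0(\xi)^{1/2}\big(\sigma_\varepsilon^2\mathbf{I}_J+\mathbf{M}_0(\xi)^{1/2}\mathbf{\Sigma}_\gamma\mathbf{M}_0(\xi)^{1/2}\big)^{-1}\mathbf{M}_0(\xi)^{1/2}\mathbf{A}_{\bm\beta}.$$ Let $\xi^*=(I_1^*,\dots,I_J^* )$ be a design under which $\bm\beta$ is estimable. For a design $\xi$ under which $\bm\beta$ is estimable, let $\psi_j(\xi)$ denote the $j$th diagonal entry of the $J\times J$ matrix $$\big(\sigma_\varepsilon^2\mathbf{I}_J+\mathbf{\Sigma}_\gamma\mathbf{M}_0(\xi)\big)^{-1}\mathbf{A}_{\bm\beta}\,\mathbf{M}_{\bm\beta}(\xi)^{-1}\mathbf{A}_{\bm\beta}^{\mathrm T}\big(\sigma_\varepsilon^2\mathbf{I}_J+\mathbf{M}_0(\xi)\mathbf{\Sigma}_\gamma\big)^{-1}.$$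 Then $\xi^*$ is locally $D$-optimal if and only if $$\psi_j(\xi^* )\le \frac{1}{I}\sum_{\ell=1}^J I_\ell^*\,\psi_\ell(\xi^* )\quad\text{for all } j=1,\dots,J.$$ Moreover, for the optimal design $\xi^*$, equality holds in this inequality for every $j$ with $I_j^*>0$.
   Context: Setting: $N$ subjects are tested at $J$ fixed time points $t_j=j-1$; the mean response at time $t_j$ is $\mu_j(\bm\beta)$ with parameter $\bm\beta\in\mathbb{R}^p$, and $\mathbf{A}_{\bm\beta}=(\partial\mu_j(\bm\beta)/\partial\beta_k)_{j,k}$ is its $J\times p$ Jacobian; random subject effects at the $J$ time points have covariance $\mathbf{\Sigma}_\gamma$ and measurement errors have variance $\sigma_\varepsilon^2$. A design $\xi=(I_1,\dots,I_J)$ specifies how many items $I_j$ are administered at time $t_j$, with total $I$; for approximate designs the $I_j$ are nonnegative reals. $\mathbf{M}_{\bm\beta}(\xi)$ above is the standardized (per subject) Fisher information. The parameter $\bm\beta$ is estimable under $\xi$ if $\mathbf{A}_{\bm\beta}$ has full column rank $p$ and its columns lie in the column space of $\mathbf{M}_0(\xi)$. A design $\xi^*$ is locally $D$-optimal (at the given $\bm\beta$) if $\log\det\mathbf{M}_{\bm\beta}(\xi^* )\ge\log\det\mathbf{M}_{\bm\beta}(\xi)$ for all approximate designs $\xi$ with total $I$ under which $\bm\beta$ is estimable. *)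

theory Defs
  imports "HOL-Analysis.Analysis"
begin

definition diag_mat :: "real^'j \<Rightarrow> real^'j^'j" where
  "diag_mat v = (\<chi> i k. if i = k then v $ i else 0)"

definition is_design :: "real \<Rightarrow> real^'j \<Rightarrow> bool" where
  "is_design Itot xi \<longleftrightarrow> (\<forall>j. 0 \<le> xi $ j) \<and> (\<Sum>j\<in>UNIV. xi $ j) = Itot"

definition M0 :: "real^'j \<Rightarrow> real^'j^'j" where
  "M0 xi = diag_mat xi"

definition M0_sqrt :: "real^'j \<Rightarrow> real^'j^'j" where
  "M0_sqrt xi = diag_mat (\<chi> j. sqrt (xi $ j))"

definition Mbeta :: "real \<Rightarrow> real^'j^'j \<Rightarrow> real^'p^'j \<Rightarrow> real^'j \<Rightarrow> real^'p^'p" where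
  "Mbeta s2 Sg A xi =
     transpose A ** M0_sqrt xi **
     matrix_inv (s2 *\<^sub>R mat 1 + M0_sqrt xi ** Sg ** M0_sqrt xi) **
     M0_sqrt xi ** A"

definition estimable :: "real^'p^'j \<Rightarrow> real^'j \<Rightarrow> bool" where
  "estimable A xi \<longleftrightarrow> rank A = CARD('p) \<and> columns A \<subseteq> span (columns (M0 xi))"

definition D_optimal ::
  "real \<Rightarrow> real^'j^'j \<Rightarrow> real^'p^'j \<Rightarrow> real \<Rightarrow> real^'j \<Rightarrow> bool" where
  "D_optimal s2 Sg A Itot xs \<longleftrightarrow>
     is_design Itot xs \<and> estimable A xs \<and>
     (\<forall>xi. is_design Itot xi \<and> estimable A xi \<longrightarrow>
        ln (det (Mbeta s2 Sg A xi)) \<le> ln (det (Mbeta s2 Sg A xs)))"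

definition psi :: "real \<Rightarrow> real^'j^'j \<Rightarrow> real^'p^'j \<Rightarrow> real^'j \<Rightarrow> 'j \<Rightarrow> real" where
  "psi s2 Sg A xi j =
     (matrix_inv (s2 *\<^sub>R mat 1 + Sg ** M0 xi) ** A **
      matrix_inv (Mbeta s2 Sg A xi) ** transpose A **
      matrix_inv (s2 *\<^sub>R mat 1 + M0 xi ** Sg)) $ j $ j"

end

theory Submission
  imports Defs
begin


lemma minv_inv:
  fixes X :: "real^'n^'n"
  assumes "invertible X"
  shows "X ** matrix_inv X = mat 1" "matrix_inv X ** X = mat 1"
proof -
  have "\<exists>Y. X ** Y = mat 1 \<and> Y ** X = mat 1" using assms by (simp add: invertible_def)
  then have "X ** matrix_inv X = mat 1 \<and> matrix_inv X ** X = mat 1"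
    unfolding matrix_inv_def by (rule someI_ex)
  then show "X ** matrix_inv X = mat 1" "matrix_inv X ** X = mat 1" by auto
qed

lemma minv_unique:
  fixes X Y :: "real^'n^'n"
  assumes "X ** Y = mat 1"
  shows "matrix_inv X = Y"
proof -
  have YX: "Y ** X = mat 1" using assms matrix_left_right_inverse by blast
  have inv: "invertible X" using assms YX invertible_def by blast
  have "matrix_inv X = matrix_inv X ** (X ** Y)" using assms by simp
  also have "\<dots> = Y" by (simp add: matrix_mul_assoc minv_inv[OF inv])
  finally show ?thesis .
qed

lemma minv_unique_left:
  fixes X Y :: "real^'n^'n"
  assumes "Y ** X = mat 1"
  shows "matrix_inv X = Y"
  using assms matrix_left_right_inverse minv_unique by blast

lemma invertible_transpose':
  fixes X :: "real^'n^'n"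
  shows "invertible (transpose X) \<longleftrightarrow> invertible X"
  by (metis det_transpose invertible_det_nz)

lemma minv_transpose:
  fixes X :: "real^'n^'n"
  assumes "invertible X"
  shows "matrix_inv (transpose X) = transpose (matrix_inv X)"
proof -
  have "transpose X ** transpose (matrix_inv X) = mat 1"
    by (metis matrix_transpose_mul minv_inv(2)[OF assms] transpose_mat)
  then show ?thesis by (rule minv_unique)
qed

lemma minv_mult:
  fixes X Y :: "real^'n^'n"
  assumes "invertible X" "invertible Y"
  shows "matrix_inv (X ** Y) = matrix_inv Y ** matrix_inv X"
proof -
  have "(X ** Y) ** (matrix_inv Y ** matrix_inv X) = X ** (Y ** matrix_inv Y) ** matrix_inv X"
    by (simp add: matrix_mul_assoc)
  also have "\<dots> = mat 1" by (simp add: minv_inv assms)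
  finally show ?thesis by (rule minv_unique)
qed

lemma invertible_minv:
  fixes X :: "real^'n^'n"
  assumes "invertible X" shows "invertible (matrix_inv X)"
  using minv_inv[OF assms] invertible_def by blast

lemma minv_minv:
  fixes X :: "real^'n^'n"
  assumes "invertible X" shows "matrix_inv (matrix_inv X) = X"
  using minv_inv[OF assms] minv_unique by blast

lemma inner_mv_transpose:
  fixes X :: "real^'n^'m"
  shows "inner x (X *v y) = inner (transpose X *v x) y"
  by (metis dot_lmul_matrix transpose_matrix_vector)

lemma invertible_if_inj0:
  fixes X :: "real^'n^'n"
  assumes "\<And>x. X *v x = 0 \<Longrightarrow> x = 0"
  shows "invertible X"
  using assms invertible_left_inverse matrix_left_invertible_ker by blast



lemma eig_basis_sub:
  fixes S :: "real^'n^'n"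
  assumes sym: "transpose S = S"
  shows "subspace V \<Longrightarrow> (\<forall>x\<in>V. S *v x \<in> V) \<Longrightarrow>
    \<exists>B. B \<subseteq> V \<and> pairwise orthogonal B \<and> (\<forall>b\<in>B. norm b = 1 \<and> (\<exists>c. S *v b = c *\<^sub>R b)) \<and> V \<subseteq> span B"
proof (induction "dim V" arbitrary: V rule: less_induct)
  case less
  have symi: "\<And>x y. x \<bullet> (S *v y) = (S *v x) \<bullet> y"
    by (metis inner_mv_transpose sym)
  show ?case
  proof (cases "V \<subseteq> {0}")
    case True
    then show ?thesis by (intro exI[of _ "{}"]) auto
  next
    case False
    then obtain x0 where x0: "x0 \<in> V" "x0 \<noteq> 0" by auto
    let ?K = "V \<inter> sphere 0 1"
    let ?f = "\<lambda>x. x \<bullet> (S *v x)"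
    have "compact ?K"
      using compact_Int_closed[OF compact_sphere closed_subspace[OF less.prems(1)]] by (simp add: Int_commute)
    moreover have "?K \<noteq> {}"
    proof -
      have "(1 / norm x0) *\<^sub>R x0 \<in> ?K" using x0 less.prems(1)
        by (simp add: subspace_scale)
      then show ?thesis by blast
    qed
    moreover have "continuous_on ?K ?f"
      by (intro continuous_intros linear_continuous_on) (auto simp: linear_conv_bounded_linear[symmetric])
    ultimately obtain v where v: "v \<in> ?K" and vmax: "\<And>y. y \<in> ?K \<Longrightarrow> ?f y \<le> ?f v"
      using continuous_attains_sup by metis
    define lam where "lam = ?f v"
    have vV: "v \<in> V" and nv: "norm v = 1" using v by auto
    have vv: "v \<bullet> v = 1" using nv by (simp add: norm_eq_1)
    have bound: "?f y \<le> lam * (y \<bullet> y)" if "y \<in> V" for y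
    proof (cases "y = 0")
      case True then show ?thesis by simp
    next
      case False
      define s where "s = 1 / norm y"
      have "s *\<^sub>R y \<in> ?K" using that False less.prems(1) by (simp add: subspace_scale s_def)
      then have "?f (s *\<^sub>R y) \<le> lam" using vmax lam_def by blast
      moreover have "?f (s *\<^sub>R y) = s^2 * ?f y"
        by (simp add: matrix_vector_mult_scaleR power2_eq_square)
      ultimately have "s^2 * ?f y \<le> lam" by simp
      moreover have "s^2 * (y \<bullet> y) = 1" using False
        by (simp add: s_def power2_norm_eq_inner[symmetric] field_simps)
      moreover have "y \<bullet> y > 0" using False by simp
      ultimately have "s^2 * ?f y \<le> s^2 * (lam * (y \<bullet> y))" by (simp add: algebra_simps)
      moreover have "s^2 > 0" using False s_def by simp
      ultimately show ?thesis by simp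
    qed
    have perp: "v \<bullet> (S *v w) = 0" if wV: "w \<in> V" and wv: "v \<bullet> w = 0" for w
    proof -
      define b where "b = v \<bullet> (S *v w)"
      define a where "a = ?f w - lam * (w \<bullet> w)"
      have a0: "a \<le> 0" using bound[OF wV] a_def by simp
      have key: "2 * t * b + t^2 * a \<le> 0" for t
      proof -
        have "v + t *\<^sub>R w \<in> V" using wV vV less.prems(1) by (simp add: subspace_add subspace_scale)
        then have h1: "?f (v + t *\<^sub>R w) \<le> lam * ((v + t *\<^sub>R w) \<bullet> (v + t *\<^sub>R w))" by (rule bound)
        have h2: "?f (v + t *\<^sub>R w) = lam + 2 * t * b + t^2 * ?f w"
          using symi[of w v] inner_commute[of "S *v w" v] unfolding lam_def b_def
          by (simp add: matrix_vector_right_distrib matrix_vector_mult_scaleR inner_add_left inner_add_right power2_eq_square algebra_simps)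
        have h3: "(v + t *\<^sub>R w) \<bullet> (v + t *\<^sub>R w) = 1 + t^2 * (w \<bullet> w)"
          using vv wv by (simp add: inner_add_left inner_add_right inner_commute power2_eq_square)
        have h4: "lam + 2 * t * b + t^2 * ?f w \<le> lam * (1 + t^2 * (w \<bullet> w))"
          using h1 unfolding h2 h3 .
        have e: "t^2 * a = t^2 * ?f w - lam * (t^2 * (w \<bullet> w))" unfolding a_def by (simp add: algebra_simps)
        have e2: "lam * (1 + t^2 * (w \<bullet> w)) = lam + lam * (t^2 * (w \<bullet> w))" by (simp add: algebra_simps)
        show ?thesis using h4 e e2 by linarith
      qed
      define d where "d = 1 - a"
      have d1: "d \<ge> 1" using a0 d_def by simp
      have "2 * (b / d) * b + (b / d)^2 * a = b^2 * (2 * d + a) / d^2"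
        using d1 by (simp add: field_simps power2_eq_square)
      with key[of "b / d"] have "b^2 * (2 * d + a) / d^2 \<le> 0" by simp
      moreover have "d^2 > 0" using d1 by simp
      ultimately have "b^2 * (2 * d + a) \<le> 0" by (simp add: divide_le_0_iff)
      moreover have "2 * d + a > 0" using a0 d_def by simp
      ultimately have "b^2 \<le> 0" by (simp add: mult_le_0_iff)
      then show ?thesis unfolding b_def by simp
    qed
    define u where "u = S *v v - lam *\<^sub>R v"
    have uV: "u \<in> V" unfolding u_def using less.prems vV by (simp add: subspace_diff subspace_scale)
    have uv: "v \<bullet> u = 0" unfolding u_def lam_def using vv by (simp add: inner_diff_right)
    have "u \<bullet> u = 0"
    proof -
      have "u \<bullet> u = u \<bullet> (S *v v)" unfolding u_def using uv u_def
        by (simp add: inner_diff_right inner_commute)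
      also have "\<dots> = v \<bullet> (S *v u)" using symi[of u v] by (simp add: inner_commute)
      also have "\<dots> = 0" using perp[OF uV uv] .
      finally show ?thesis .
    qed
    then have Sv: "S *v v = lam *\<^sub>R v" unfolding u_def by simp
    define V' where "V' = {x \<in> V. v \<bullet> x = 0}"
    have subV': "subspace V'" unfolding V'_def using less.prems(1)
      by (auto simp: subspace_def inner_add_right)
    have invV': "\<forall>x\<in>V'. S *v x \<in> V'"
    proof
      fix x assume "x \<in> V'"
      then have "x \<in> V" "v \<bullet> x = 0" unfolding V'_def by auto
      moreover have "v \<bullet> (S *v x) = 0" using symi[of v x] Sv \<open>v \<bullet> x = 0\<close> by simp
      ultimately show "S *v x \<in> V'" using less.prems(2) unfolding V'_def by auto
    qed
    have "dim V' < dim V"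
    proof (rule dim_psubset)
      have "V' \<subseteq> V" unfolding V'_def by auto
      moreover have "v \<notin> V'" using vv unfolding V'_def by auto
      ultimately have "V' \<subset> V" using vV by blast
      then show "span V' \<subset> span V" using subV' less.prems(1) by (metis span_eq_iff)
    qed
    from less.hyps[OF this subV' invV'] obtain B' where
      B': "B' \<subseteq> V'" "pairwise orthogonal B'" "\<forall>b\<in>B'. norm b = 1 \<and> (\<exists>c. S *v b = c *\<^sub>R b)" "V' \<subseteq> span B'"
      by blast
    show ?thesis
    proof (intro exI[of _ "insert v B'"] conjI)
      show "insert v B' \<subseteq> V" using B'(1) vV V'_def by auto
      show "pairwise orthogonal (insert v B')"
        using B'(1,2) unfolding pairwise_insert V'_def orthogonal_def
        by (auto simp: inner_commute)
      show "\<forall>b\<in>insert v B'. norm b = 1 \<and> (\<exists>c. S *v b = c *\<^sub>R b)" using B'(3) nv Sv by auto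
      show "V \<subseteq> span (insert v B')"
      proof
        fix x assume xV: "x \<in> V"
        have "x - (v \<bullet> x) *\<^sub>R v \<in> V'" unfolding V'_def using xV vV vv less.prems(1)
          by (simp add: subspace_diff subspace_scale inner_diff_right)
        then have "x - (v \<bullet> x) *\<^sub>R v \<in> span (insert v B')" using B'(4)
          by (meson in_mono span_mono subset_insertI)
        moreover have "(v \<bullet> x) *\<^sub>R v \<in> span (insert v B')" by (simp add: span_base span_scale)
        ultimately have "x - (v \<bullet> x) *\<^sub>R v + (v \<bullet> x) *\<^sub>R v \<in> span (insert v B')" by (rule span_add)
        then show "x \<in> span (insert v B')" by simp
      qed
    qed
  qed
qed


lemma sum_delta_l: fixes f :: "'n::finite \<Rightarrow> real" shows "(\<Sum>k\<in>UNIV. (if i = k then c else 0) * f k) = (c * f i :: real)"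
proof -
  have "(\<Sum>k\<in>UNIV. (if i = k then c else 0) * f k) = (\<Sum>k\<in>UNIV. if i = k then c * f k else 0)"
    by (rule sum.cong) auto
  then show ?thesis by simp
qed

lemma sum_delta_r: fixes f :: "'n::finite \<Rightarrow> real" shows "(\<Sum>k\<in>UNIV. f k * (if k = j then c else 0)) = (f j * c :: real)"
proof -
  have "(\<Sum>k\<in>UNIV. f k * (if k = j then c else 0)) = (\<Sum>k\<in>UNIV. if k = j then f k * c else 0)"
    by (rule sum.cong) auto
  then show ?thesis by simp
qed

lemma diag_mult: "diag_mat a ** diag_mat b = diag_mat (\<chi> i. a$i * b$i)"
  by (simp add: diag_mat_def matrix_matrix_mult_def vec_eq_iff sum_delta_l)

lemma diag_transpose[simp]: "transpose (diag_mat a) = diag_mat a"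
  by (simp add: diag_mat_def transpose_def vec_eq_iff)

lemma diag_one: "diag_mat (\<chi> i. 1) = mat 1"
  by (simp add: diag_mat_def mat_def vec_eq_iff)

lemma diag_axis: "diag_mat l *v axis k 1 = (l$k) *\<^sub>R axis k (1::real)"
  by (simp add: diag_mat_def matrix_vector_mult_def vec_eq_iff axis_def sum_delta_l)

lemma det_diag: "det (diag_mat (l::real^'n)) = (\<Prod>i\<in>UNIV. l$i)"
  by (subst det_diagonal) (auto simp: diag_mat_def)

lemma trace_diag_mult: "trace (diag_mat l ** (X::real^'n^'n)) = (\<Sum>k\<in>UNIV. l$k * X$k$k)"
  by (simp add: trace_def diag_mat_def matrix_matrix_mult_def sum_delta_l)

lemma trace_diag: "trace (diag_mat (l::real^'n)) = (\<Sum>k\<in>UNIV. l$k)"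
  by (simp add: trace_def diag_mat_def)

lemma diag_entry: "(X::real^'n^'n) $ k $ k = axis k 1 \<bullet> (X *v axis k 1)"
  by (simp only: inner_axis' matrix_vector_mul_component inner_axis) simp

lemma dim_univ_cart: "dim (UNIV::(real^'n) set) = CARD('n)"
  by simp

lemma spectral:
  fixes S :: "real^'n^'n"
  assumes sym: "transpose S = S"
  obtains Q l where "orthogonal_matrix Q" "S = Q ** diag_mat l ** transpose Q"
proof -
  obtain B where B: "pairwise orthogonal B" "\<forall>b\<in>B. norm b = 1 \<and> (\<exists>c. S *v b = c *\<^sub>R b)" "UNIV \<subseteq> span B"
    using eig_basis_sub[OF sym, of UNIV] by auto
  have 0: "0 \<notin> B" using B(2) by auto
  have ind: "independent B" using pairwise_orthogonal_independent[OF B(1) 0] .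
  have fin: "finite B" using ind finiteI_independent by blast
  have "card B = dim (span B)" using dim_span_eq_card_independent[OF ind] by simp
  also have "\<dots> = CARD('n)" using B(3) dim_univ_cart by (metis top.extremum_uniqueI)
  finally have cB: "card B = CARD('n)" .
  then obtain f where f: "bij_betw f (UNIV::'n set) B"
    by (metis fin finite_class.finite_UNIV finite_same_card_bij)
  have fB: "f i \<in> B" for i using f by (auto simp: bij_betw_def)
  have [simp]: "norm (f i) = 1" for i using B(2) fB by blast
  have [simp]: "i \<noteq> j \<Longrightarrow> orthogonal (f i) (f j)" for i j
    using B(1) f by (auto simp: pairwise_def bij_betw_def inj_on_def)
  define Q where "Q = (\<chi> i j. f j $ i)"
  have oQ: "orthogonal_matrix Q"
    unfolding Q_def by (simp add: orthogonal_matrix_orthonormal_columns column_def)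
  define l where "l = (\<chi> j. SOME c. S *v f j = c *\<^sub>R f j)"
  have eig: "S *v f j = (l$j) *\<^sub>R f j" for j
  proof -
    have "\<exists>c. S *v f j = c *\<^sub>R f j" using B(2) fB by blast
    then have "S *v f j = (SOME c. S *v f j = c *\<^sub>R f j) *\<^sub>R f j" by (rule someI_ex)
    then show ?thesis unfolding l_def by simp
  qed
  have SQ: "S ** Q = Q ** diag_mat l"
  proof -
    have "(S ** Q) $ i $ j = (Q ** diag_mat l) $ i $ j" for i j
    proof -
      have "(S ** Q) $ i $ j = (S *v f j) $ i"
        by (simp add: Q_def matrix_matrix_mult_def matrix_vector_mult_def)
      also have "\<dots> = l$j * f j $ i" by (simp add: eig)
      also have "\<dots> = (Q ** diag_mat l) $ i $ j"
        by (simp add: Q_def diag_mat_def matrix_matrix_mult_def if_distrib sum.delta cong: if_cong)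
      finally show ?thesis .
    qed
    then show ?thesis by (simp add: vec_eq_iff)
  qed
  have "S = S ** (Q ** transpose Q)" using oQ by (simp add: orthogonal_matrix_def)
  also have "\<dots> = Q ** diag_mat l ** transpose Q" by (simp add: matrix_mul_assoc SQ)
  finally show ?thesis using that oQ by blast
qed

lemma orth_col:
  fixes Q :: "real^'n^'n"
  assumes "orthogonal_matrix Q"
  shows "(Q *v axis k 1) \<bullet> (Q *v axis k 1) = 1"
proof -
  have "axis k 1 \<bullet> ((transpose Q ** Q) *v axis k 1) = (Q *v axis k 1) \<bullet> (Q *v axis k 1)"
    by (simp only: matrix_vector_mul_assoc[symmetric] inner_mv_transpose transpose_transpose)
  moreover have "axis k 1 \<bullet> ((transpose Q ** Q) *v axis k 1) = 1"
    using assms by (simp add: orthogonal_matrix_def inner_axis_axis)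
  ultimately show ?thesis by simp
qed

lemma spec_eig:
  fixes Q :: "real^'n^'n"
  assumes "orthogonal_matrix Q" "S = Q ** diag_mat l ** transpose Q"
  shows "(Q *v axis k 1) \<bullet> (S *v (Q *v axis k 1)) = l $ k"
proof -
  have QQ: "transpose Q ** Q = mat 1" using assms(1) by (simp add: orthogonal_matrix_def)
  have "S *v (Q *v axis k 1) = Q *v (diag_mat l *v ((transpose Q ** Q) *v axis k 1))"
    unfolding assms(2) by (simp only: matrix_vector_mul_assoc matrix_mul_assoc)
  also have "\<dots> = Q *v (diag_mat l *v axis k 1)" unfolding QQ by simp
  also have "\<dots> = l$k *\<^sub>R (Q *v axis k 1)" by (simp add: diag_axis matrix_vector_mult_scaleR)
  finally show ?thesis using orth_col[OF assms(1)] by simp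
qed

lemma det_spec:
  fixes Q :: "real^'n^'n"
  assumes "orthogonal_matrix Q" "S = Q ** diag_mat l ** transpose Q"
  shows "det S = (\<Prod>i\<in>UNIV. l$i)"
proof -
  have "det S = det Q * det Q * (\<Prod>i\<in>UNIV. l$i)" using assms(2) by (simp add: det_mul det_diag)
  moreover have "det Q * det Q = 1" using det_orthogonal_matrix[OF assms(1)] by auto
  ultimately show ?thesis by simp
qed

lemma trace_spec:
  fixes Q :: "real^'n^'n"
  assumes "orthogonal_matrix Q" "S = Q ** diag_mat l ** transpose Q"
  shows "trace S = (\<Sum>i\<in>UNIV. l$i)"
proof -
  have "trace S = trace (Q ** (diag_mat l ** transpose Q))" using assms(2)
    by (simp only: matrix_mul_assoc)
  also have "\<dots> = trace ((diag_mat l ** transpose Q) ** Q)" by (rule trace_mul_sym)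
  also have "\<dots> = trace (diag_mat l ** (transpose Q ** Q))" by (simp only: matrix_mul_assoc)
  also have "\<dots> = trace (diag_mat l)" using assms(1) by (simp add: orthogonal_matrix_def)
  finally show ?thesis by (simp add: trace_diag)
qed

definition psd :: "real^'n^'n \<Rightarrow> bool" where
  "psd S \<longleftrightarrow> transpose S = S \<and> (\<forall>x. 0 \<le> x \<bullet> (S *v x))"

definition pd :: "real^'n^'n \<Rightarrow> bool" where
  "pd S \<longleftrightarrow> transpose S = S \<and> (\<forall>x. x \<noteq> 0 \<longrightarrow> 0 < x \<bullet> (S *v x))"

lemma pd_det_pos:
  fixes S :: "real^'n^'n"
  assumes "pd S" shows "det S > 0"
proof -
  obtain Q l where Q: "orthogonal_matrix Q" "S = Q ** diag_mat l ** transpose Q"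
    using spectral assms pd_def by metis
  have "l $ k > 0" for k
  proof -
    have "Q *v axis k 1 \<noteq> 0" using orth_col[OF Q(1), of k] by auto
    then show ?thesis using assms spec_eig[OF Q, of k] unfolding pd_def by auto
  qed
  then show ?thesis using det_spec[OF Q] by (simp add: prod_pos)
qed

lemma pd_invertible:
  fixes S :: "real^'n^'n"
  assumes "pd S" shows "invertible S"
  using pd_det_pos[OF assms] invertible_det_nz by force

lemma psd_trace:
  fixes P Y :: "real^'n^'n"
  assumes "psd P" "\<And>x. 0 \<le> x \<bullet> (Y *v x)"
  shows "0 \<le> trace (P ** Y)"
proof -
  obtain Q l where Q: "orthogonal_matrix Q" "P = Q ** diag_mat l ** transpose Q"
    using spectral assms psd_def by metis
  have "trace (P ** Y) = trace (Q ** (diag_mat l ** transpose Q ** Y))"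
    using Q(2) by (simp only: matrix_mul_assoc)
  also have "\<dots> = trace ((diag_mat l ** transpose Q ** Y) ** Q)" by (rule trace_mul_sym)
  also have "\<dots> = trace (diag_mat l ** (transpose Q ** Y ** Q))" by (simp only: matrix_mul_assoc)
  also have "\<dots> = (\<Sum>k\<in>UNIV. l$k * (transpose Q ** Y ** Q)$k$k)" by (rule trace_diag_mult)
  also have "\<dots> \<ge> 0"
  proof (rule sum_nonneg)
    fix k
    have "l $ k \<ge> 0" using assms(1) spec_eig[OF Q, of k] unfolding psd_def by metis
    moreover have "(transpose Q ** Y ** Q)$k$k = (Q *v axis k 1) \<bullet> (Y *v (Q *v axis k 1))"
      apply (subst diag_entry)
      by (simp only: matrix_vector_mul_assoc[symmetric] inner_mv_transpose transpose_transpose)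
    ultimately show "0 \<le> l$k * (transpose Q ** Y ** Q)$k$k" using assms(2) by simp
  qed
  finally show ?thesis .
qed


declare transpose_matrix_vector[simp del] vector_transpose_matrix[simp del]

lemma pd_spec_pos:
  fixes S Q :: "real^'n^'n"
  assumes "pd S" "orthogonal_matrix Q" "S = Q ** diag_mat l ** transpose Q"
  shows "l $ k > 0"
proof -
  have "Q *v axis k 1 \<noteq> 0" using orth_col[OF assms(2), of k] by auto
  then show ?thesis using assms(1) spec_eig[OF assms(2,3), of k] unfolding pd_def by auto
qed

lemma logdet_ineq:
  fixes M M' :: "real^'n^'n"
  assumes pdM: "pd M" and pdM': "pd M'"
  shows "ln (det M') - ln (det M) \<le> trace (matrix_inv M ** M') - real CARD('n)"
proof -
  obtain Q l where Q: "orthogonal_matrix Q" "M = Q ** diag_mat l ** transpose Q"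
    using spectral pdM pd_def by metis
  have lpos: "\<And>k. l $ k > 0" using pd_spec_pos[OF pdM Q] .
  have QtQ: "transpose Q ** Q = mat 1" and QQt: "Q ** transpose Q = mat 1"
    using Q(1) by (auto simp: orthogonal_matrix_def)
  define g where "g = (\<chi> i. 1 / sqrt (l $ i))"
  define H where "H = diag_mat g ** transpose Q"
  define X where "X = H ** M' ** transpose H"
  have gl: "g$i * g$i * l$i = 1" for i
    using lpos[of i] by (simp add: g_def)
  have HtH: "transpose H ** H = Q ** diag_mat (\<chi> i. g$i * g$i) ** transpose Q"
  proof -
    have "transpose H ** H = Q ** (diag_mat g ** diag_mat g) ** transpose Q"
      unfolding H_def by (simp add: matrix_transpose_mul matrix_mul_assoc)
    then show ?thesis by (simp add: diag_mult)
  qed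
  have Minv: "matrix_inv M = transpose H ** H"
  proof (rule minv_unique)
    have "M ** (transpose H ** H) = Q ** (diag_mat l ** (transpose Q ** Q) ** diag_mat (\<chi> i. g$i * g$i)) ** transpose Q"
      unfolding HtH Q(2) by (simp only: matrix_mul_assoc)
    also have "\<dots> = Q ** diag_mat (\<chi> i. 1) ** transpose Q"
    proof -
      have gl': "\<And>i. l$i * (g$i * g$i) = 1" using gl by (simp add: mult.commute)
      show ?thesis unfolding QtQ by (simp add: diag_mult gl')
    qed
    also have "\<dots> = mat 1" by (simp add: diag_one QQt)
    finally show "M ** (transpose H ** H) = mat 1" .
  qed
  have symX: "transpose X = X" using pdM' unfolding X_def pd_def
    by (simp add: matrix_transpose_mul matrix_mul_assoc)
  have Hinj: "transpose H *v x = 0 \<Longrightarrow> x = 0" for x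
  proof -
    assume h: "transpose H *v x = 0"
    define G where "G = diag_mat (\<chi> i. sqrt (l $ i)) ** transpose Q"
    have "G ** transpose H = diag_mat (\<chi> i. sqrt (l $ i)) ** (transpose Q ** Q) ** diag_mat g"
      unfolding G_def H_def by (simp add: matrix_transpose_mul matrix_mul_assoc)
    also have "\<dots> = mat 1"
    proof -
      have e: "(\<chi> i. sqrt (l $ i) * g $ i) = (\<chi> i. 1)"
      proof -
        have "sqrt (l $ i) * g $ i = 1" for i using lpos[of i] by (simp add: g_def)
        then show ?thesis by (simp add: vec_eq_iff)
      qed
      show ?thesis unfolding QtQ by (simp add: diag_mult e diag_one)
    qed
    finally have "G ** transpose H = mat 1" .
    then have "x = G *v (transpose H *v x)" by (simp add: matrix_vector_mul_assoc)
    then show "x = 0" using h by simp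
  qed
  have pdX: "pd X" unfolding pd_def
  proof (intro conjI allI impI symX)
    fix x :: "real^'n" assume "x \<noteq> 0"
    then have "transpose H *v x \<noteq> 0" using Hinj by blast
    then have "0 < (transpose H *v x) \<bullet> (M' *v (transpose H *v x))" using pdM' pd_def by blast
    also have "\<dots> = x \<bullet> (X *v x)" unfolding X_def
      by (simp only: inner_mv_transpose matrix_vector_mul_assoc[symmetric] transpose_transpose)
    finally show "0 < x \<bullet> (X *v x)" .
  qed
  obtain R m where R: "orthogonal_matrix R" "X = R ** diag_mat m ** transpose R"
    using spectral symX by metis
  have mpos: "\<And>k. m $ k > 0" using pd_spec_pos[OF pdX R] .
  have detX: "det X = (\<Prod>i\<in>UNIV. m$i)" using det_spec[OF R] .
  have trX: "trace X = (\<Sum>i\<in>UNIV. m$i)" using trace_spec[OF R] .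
  have dM: "det M = (\<Prod>i\<in>UNIV. l$i)" using det_spec[OF Q] .
  have dQ: "det Q * det Q = 1" using det_orthogonal_matrix[OF Q(1)] by auto
  have dH: "det H = (\<Prod>i\<in>UNIV. g$i) * det Q" unfolding H_def
    by (simp only: det_mul det_diag det_transpose)
  have "det X = det H * det M' * det H" unfolding X_def
    by (simp only: det_mul det_transpose)
  then have "det X * det M = (det Q * det Q) * ((\<Prod>i\<in>UNIV. g$i) * (\<Prod>i\<in>UNIV. g$i) * (\<Prod>i\<in>UNIV. l$i)) * det M'"
    unfolding dH dM by (simp only: mult_ac)
  also have "(\<Prod>i\<in>UNIV. g$i) * (\<Prod>i\<in>UNIV. g$i) * (\<Prod>i\<in>UNIV. l$i) = (\<Prod>i\<in>UNIV. g$i * g$i * l$i)"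
    by (simp only: prod.distrib)
  also have "\<dots> = 1" by (simp only: gl prod.neutral_const)
  finally have dXM: "det X * det M = det M'" using dQ by simp
  have dMpos: "det M > 0" using pd_det_pos[OF pdM] .
  have dXpos: "det X > 0" using pd_det_pos[OF pdX] .
  have "ln (det M') - ln (det M) = ln (det X)"
  proof -
    have "ln (det M') = ln (det X) + ln (det M)" using ln_mult[of "det X" "det M"] dXM dXpos dMpos by simp
    then show ?thesis by simp
  qed
  also have "\<dots> = (\<Sum>i\<in>UNIV. ln (m$i))" unfolding detX
  proof (rule ln_prod)
    show "m $ i \<noteq> 0" for i using mpos[of i] by simp
  qed simp
  also have "\<dots> \<le> (\<Sum>i\<in>UNIV. m$i - 1)"
    by (rule sum_mono) (rule ln_le_minus_one[OF mpos])
  also have "\<dots> = trace X - real CARD('n)" unfolding trX by (simp add: sum_subtractf)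
  also have "trace X = trace (matrix_inv M ** M')"
  proof -
    have "trace X = trace (H ** (M' ** transpose H))" unfolding X_def by (simp only: matrix_mul_assoc)
    also have "\<dots> = trace ((M' ** transpose H) ** H)" by (rule trace_mul_sym)
    also have "\<dots> = trace (M' ** (transpose H ** H))" by (simp only: matrix_mul_assoc)
    also have "\<dots> = trace ((transpose H ** H) ** M')" by (rule trace_mul_sym)
    finally show ?thesis unfolding Minv .
  qed
  finally show ?thesis .
qed


declare transpose_matrix_vector[simp del] vector_transpose_matrix[simp del]

lemma mm_add_r: "((A::real^'n^'m) + B) ** C = A ** C + B ** C"
  by (simp add: matrix_matrix_mult_def vec_eq_iff sum.distrib distrib_right)
lemma mm_diff_r: "((A::real^'n^'m) - B) ** C = A ** C - B ** C"
  by (simp add: matrix_matrix_mult_def vec_eq_iff sum_subtractf left_diff_distrib)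
lemma mm_diff_l: "(A::real^'n^'m) ** (B - C) = A ** B - A ** C"
  by (simp add: matrix_matrix_mult_def vec_eq_iff sum_subtractf right_diff_distrib)
lemma mm_scale_l: "(k *\<^sub>R (A::real^'n^'m)) ** B = k *\<^sub>R (A ** B)"
  by (simp add: matrix_matrix_mult_def vec_eq_iff sum_distrib_left mult.assoc)
lemma mm_scale_r: "(A::real^'n^'m) ** (k *\<^sub>R B) = k *\<^sub>R (A ** B)"
  by (simp add: matrix_matrix_mult_def vec_eq_iff sum_distrib_left mult.left_commute)
lemma transpose_add': "transpose ((A::real^'n^'m) + B) = transpose A + transpose B"
  by (simp add: transpose_def vec_eq_iff)
lemma transpose_diff': "transpose ((A::real^'n^'m) - B) = transpose A - transpose B"
  by (simp add: transpose_def vec_eq_iff)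
lemma mv_scale_l: "(k *\<^sub>R (A::real^'n^'m)) *v x = k *\<^sub>R (A *v x)"
  by (simp add: matrix_vector_mult_def vec_eq_iff sum_distrib_left mult.assoc)
lemma mv_diag: "diag_mat d *v z = (\<chi> i. d$i * z$i)"
  by (simp add: diag_mat_def matrix_vector_mult_def vec_eq_iff sum_delta_l)
lemma inner_diag: "z \<bullet> (diag_mat d *v z) = (\<Sum>i\<in>UNIV. d$i * (z$i)^2)"
  by (simp add: mv_diag inner_vec_def power2_eq_square mult_ac)
lemma inner_diag2: "z \<bullet> (diag_mat d *v y) = (\<Sum>i\<in>UNIV. d$i * z$i * y$i)"
  by (simp add: mv_diag inner_vec_def mult_ac)
lemma diag_diff: "diag_mat a - diag_mat b = diag_mat (a - b)"
  by (simp add: diag_mat_def vec_eq_iff)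
lemma diag_scale: "k *\<^sub>R diag_mat a = diag_mat (k *\<^sub>R a)"
  by (simp add: diag_mat_def vec_eq_iff)

definition nonneg :: "real^'j \<Rightarrow> bool" where "nonneg xi \<longleftrightarrow> (\<forall>j. 0 \<le> xi$j)"
definition Bm :: "real \<Rightarrow> real^'j^'j \<Rightarrow> real^'j \<Rightarrow> real^'j^'j" where
  "Bm s2 Sg xi = s2 *\<^sub>R mat 1 + M0 xi ** Sg"
definition Cm :: "real \<Rightarrow> real^'j^'j \<Rightarrow> real^'j \<Rightarrow> real^'j^'j" where
  "Cm s2 Sg xi = s2 *\<^sub>R mat 1 + Sg ** M0 xi"
definition Nm :: "real \<Rightarrow> real^'j^'j \<Rightarrow> real^'j \<Rightarrow> real^'j^'j" where
  "Nm s2 Sg xi = matrix_inv (Bm s2 Sg xi) ** M0 xi"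

lemma diag_quad_nonneg: "nonneg d \<Longrightarrow> 0 \<le> (\<Sum>i\<in>UNIV. d$i * (z$i)^2)"
  unfolding nonneg_def by (intro sum_nonneg) simp

lemma diag_quad_zero:
  assumes "nonneg d" "(\<Sum>i\<in>UNIV. d$i * (z$i)^2) = 0"
  shows "diag_mat d *v z = 0"
proof -
  have "\<forall>i\<in>UNIV. d$i * (z$i)^2 = 0"
    using assms by (subst sum_nonneg_eq_0_iff[symmetric]) (auto simp: nonneg_def)
  then have "d$i * z$i = 0" for i by (auto simp: power2_eq_square)
  then show ?thesis by (simp add: mv_diag vec_eq_iff)
qed

lemma Cm_transpose: "psd Sg \<Longrightarrow> transpose (Cm s2 Sg xi) = Bm s2 Sg xi"
  by (simp add: Cm_def Bm_def transpose_add' transpose_scalar matrix_transpose_mul M0_def psd_def)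

lemma psd_sym: "psd Sg \<Longrightarrow> x \<bullet> (Sg *v y) = (Sg *v x) \<bullet> y"
  unfolding psd_def by (metis inner_mv_transpose)

lemma Cm_mv: "Cm s2 Sg xi *v z = s2 *\<^sub>R z + Sg *v (M0 xi *v z)"
  by (simp add: Cm_def matrix_vector_mult_add_rdistrib mv_scale_l matrix_vector_mul_assoc)

lemma Cm_inv:
  assumes s2: "s2 > 0" and Sg: "psd Sg" and xi: "nonneg xi"
  shows "invertible (Cm s2 Sg xi)"
proof (rule invertible_if_inj0)
  fix z assume h: "Cm s2 Sg xi *v z = 0"
  define w where "w = M0 xi *v z"
  have e: "s2 *\<^sub>R z + Sg *v w = 0" using h by (simp add: Cm_mv w_def)
  have "0 = w \<bullet> (s2 *\<^sub>R z + Sg *v w)" using e by simp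
  also have "\<dots> = s2 * (z \<bullet> w) + w \<bullet> (Sg *v w)" by (simp add: inner_add_right inner_commute)
  finally have e2: "s2 * (z \<bullet> w) + w \<bullet> (Sg *v w) = 0" by simp
  have q: "z \<bullet> w = (\<Sum>i\<in>UNIV. xi$i * (z$i)^2)" unfolding w_def M0_def by (rule inner_diag)
  have "0 \<le> z \<bullet> w" unfolding q using xi by (rule diag_quad_nonneg)
  moreover have "0 \<le> w \<bullet> (Sg *v w)" using Sg psd_def by blast
  ultimately have "z \<bullet> w = 0" using e2 s2
    by (smt (verit) mult_pos_pos mult_nonneg_nonneg)
  then have "(\<Sum>i\<in>UNIV. xi$i * (z$i)^2) = 0" using q by simp
  then have "w = 0" unfolding w_def M0_def by (rule diag_quad_zero[OF xi])
  then show "z = 0" using e s2 by simp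
qed

lemma Bm_inv:
  assumes "s2 > 0" "psd Sg" "nonneg xi"
  shows "invertible (Bm s2 Sg xi)"
  using Cm_inv[OF assms] Cm_transpose[OF assms(2)] invertible_transpose' by metis

lemma Binv_transpose:
  assumes "s2 > 0" "psd Sg" "nonneg xi"
  shows "transpose (matrix_inv (Bm s2 Sg xi)) = matrix_inv (Cm s2 Sg xi)"
proof -
  have "matrix_inv (Bm s2 Sg xi) = transpose (matrix_inv (Cm s2 Sg xi))"
    using minv_transpose[OF Cm_inv[OF assms]] Cm_transpose[OF assms(2)] by simp
  then show ?thesis by simp
qed

lemma DC_BD: "psd Sg \<Longrightarrow> M0 xi ** Cm s2 Sg xi = Bm s2 Sg xi ** M0 xi"
  by (simp add: Cm_def Bm_def matrix_add_ldistrib mm_add_r matrix_scalar_ac mm_scale_l matrix_mul_assoc)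

lemma N_alt:
  assumes "s2 > 0" "psd Sg" "nonneg xi"
  shows "Nm s2 Sg xi = M0 xi ** matrix_inv (Cm s2 Sg xi)"
proof -
  let ?B = "Bm s2 Sg xi" and ?C = "Cm s2 Sg xi" and ?D = "M0 xi"
  have iB: "invertible ?B" and iC: "invertible ?C" using Bm_inv[OF assms] Cm_inv[OF assms] by auto
  have "matrix_inv ?B ** ?D = matrix_inv ?B ** ?D ** (?C ** matrix_inv ?C)" by (simp add: minv_inv[OF iC])
  also have "\<dots> = matrix_inv ?B ** (?D ** ?C) ** matrix_inv ?C" by (simp add: matrix_mul_assoc)
  also have "\<dots> = matrix_inv ?B ** (?B ** ?D) ** matrix_inv ?C" using DC_BD[OF assms(2)] by simp
  also have "\<dots> = ?D ** matrix_inv ?C" by (simp add: matrix_mul_assoc minv_inv[OF iB])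
  finally show ?thesis unfolding Nm_def .
qed

lemma N_sym:
  assumes "s2 > 0" "psd Sg" "nonneg xi"
  shows "transpose (Nm s2 Sg xi) = Nm s2 Sg xi"
proof -
  have "transpose (Nm s2 Sg xi) = transpose (M0 xi) ** transpose (matrix_inv (Bm s2 Sg xi))"
    unfolding Nm_def by (rule matrix_transpose_mul)
  also have "\<dots> = M0 xi ** matrix_inv (Cm s2 Sg xi)" by (simp add: M0_def Binv_transpose[OF assms])
  finally show ?thesis using N_alt[OF assms] by simp
qed


declare transpose_matrix_vector[simp del] vector_transpose_matrix[simp del]

lemma Mbeta_eq:
  assumes s2: "s2 > 0" and Sg: "psd Sg" and xi: "nonneg xi"
  shows "Mbeta s2 Sg A xi = transpose A ** Nm s2 Sg xi ** A"
proof -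
  define Dh where "Dh = M0_sqrt xi"
  define K where "K = s2 *\<^sub>R mat 1 + Dh ** Sg ** Dh"
  let ?B = "Bm s2 Sg xi"
  have sq: "(\<chi> i. (\<chi> j. sqrt (xi$j))$i * (\<chi> j. sqrt (xi$j))$i) = xi"
    using xi by (simp add: vec_eq_iff nonneg_def)
  have DhDh: "Dh ** Dh = M0 xi" unfolding Dh_def M0_sqrt_def M0_def by (simp only: diag_mult sq)
  have Dht: "transpose Dh = Dh" by (simp add: Dh_def M0_sqrt_def)
  have iK: "invertible K"
  proof (rule invertible_if_inj0)
    fix x assume "K *v x = 0"
    then have h0: "x \<bullet> (K *v x) = 0" by simp
    have "x \<bullet> (Dh *v (Sg *v (Dh *v x))) = (Dh *v x) \<bullet> (Sg *v (Dh *v x))"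
      by (subst inner_mv_transpose) (simp only: Dht)
    then have "x \<bullet> (K *v x) = s2 * (x \<bullet> x) + (Dh *v x) \<bullet> (Sg *v (Dh *v x))"
      unfolding K_def by (simp add: matrix_vector_mult_add_rdistrib mv_scale_l inner_add_right matrix_vector_mul_assoc[symmetric])
    moreover have "0 \<le> (Dh *v x) \<bullet> (Sg *v (Dh *v x))" using Sg psd_def by blast
    moreover have "0 \<le> x \<bullet> x" by simp
    ultimately have "x \<bullet> x = 0" using h0 s2
      by (smt (verit) mult_pos_pos)
    then show "x = 0" by simp
  qed
  have BDh: "?B ** Dh = Dh ** K"
    unfolding Bm_def K_def DhDh[symmetric]
    by (simp add: mm_add_r matrix_add_ldistrib mm_scale_l mm_scale_r matrix_mul_assoc)
  have iB: "invertible ?B" using Bm_inv[OF s2 Sg xi] .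
  have swap: "Dh ** matrix_inv K = matrix_inv ?B ** Dh"
  proof -
    have "matrix_inv ?B ** Dh = matrix_inv ?B ** Dh ** (K ** matrix_inv K)" by (simp add: minv_inv[OF iK])
    also have "\<dots> = matrix_inv ?B ** (Dh ** K) ** matrix_inv K" by (simp add: matrix_mul_assoc)
    also have "\<dots> = matrix_inv ?B ** (?B ** Dh) ** matrix_inv K" by (simp add: BDh)
    also have "\<dots> = Dh ** matrix_inv K" by (simp add: matrix_mul_assoc minv_inv[OF iB])
    finally show ?thesis by simp
  qed
  have "Mbeta s2 Sg A xi = transpose A ** (Dh ** matrix_inv K) ** Dh ** A"
    unfolding Mbeta_def Dh_def K_def by (simp add: matrix_mul_assoc)
  also have "\<dots> = transpose A ** (matrix_inv ?B ** Dh) ** Dh ** A" by (simp only: swap)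
  also have "\<dots> = transpose A ** (matrix_inv ?B ** (Dh ** Dh)) ** A" by (simp only: matrix_mul_assoc)
  also have "\<dots> = transpose A ** Nm s2 Sg xi ** A" by (simp only: DhDh Nm_def)
  finally show ?thesis .
qed

lemma quad_key:
  assumes s2: "s2 > 0" and Sg: "psd Sg" and xi: "nonneg xi" and xi': "nonneg xi'"
  shows "v \<bullet> ((Nm s2 Sg xi' - Nm s2 Sg xi) *v v)
    \<le> s2 * (v \<bullet> ((matrix_inv (Bm s2 Sg xi) ** (M0 xi' - M0 xi) ** matrix_inv (Cm s2 Sg xi)) *v v))"
proof -
  define z where "z = matrix_inv (Cm s2 Sg xi) *v v"
  define z' where "z' = matrix_inv (Cm s2 Sg xi') *v v"
  define w where "w = M0 xi *v z"
  define w' where "w' = M0 xi' *v z'"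
  have "v = Cm s2 Sg xi *v z" unfolding z_def
    by (simp add: matrix_vector_mul_assoc minv_inv[OF Cm_inv[OF s2 Sg xi]])
  then have vz: "v = s2 *\<^sub>R z + Sg *v w" unfolding w_def by (simp add: Cm_mv)
  have "v = Cm s2 Sg xi' *v z'" unfolding z'_def
    by (simp add: matrix_vector_mul_assoc minv_inv[OF Cm_inv[OF s2 Sg xi']])
  then have vz': "v = s2 *\<^sub>R z' + Sg *v w'" unfolding w'_def by (simp add: Cm_mv)
  have Nv: "Nm s2 Sg xi *v v = w"
    by (simp add: N_alt[OF s2 Sg xi] z_def w_def matrix_vector_mul_assoc)
  have Nv': "Nm s2 Sg xi' *v v = w'"
    by (simp add: N_alt[OF s2 Sg xi'] z'_def w'_def matrix_vector_mul_assoc)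
  have R: "v \<bullet> ((matrix_inv (Bm s2 Sg xi) ** (M0 xi' - M0 xi) ** matrix_inv (Cm s2 Sg xi)) *v v)
      = z \<bullet> (M0 xi' *v z) - z \<bullet> w"
  proof -
    have "v \<bullet> ((matrix_inv (Bm s2 Sg xi) ** (M0 xi' - M0 xi) ** matrix_inv (Cm s2 Sg xi)) *v v)
        = v \<bullet> (matrix_inv (Bm s2 Sg xi) *v ((M0 xi' - M0 xi) *v z))"
      unfolding z_def by (simp only: matrix_vector_mul_assoc matrix_mul_assoc)
    also have "\<dots> = (transpose (matrix_inv (Bm s2 Sg xi)) *v v) \<bullet> ((M0 xi' - M0 xi) *v z)"
      by (rule inner_mv_transpose)
    also have "\<dots> = z \<bullet> ((M0 xi' - M0 xi) *v z)" by (simp add: Binv_transpose[OF s2 Sg xi] z_def)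
    finally show ?thesis by (simp add: matrix_vector_mult_diff_rdistrib inner_diff_right w_def)
  qed
  have lhs: "v \<bullet> ((Nm s2 Sg xi' - Nm s2 Sg xi) *v v) = v \<bullet> w' - v \<bullet> w"
    by (simp add: matrix_vector_mult_diff_rdistrib inner_diff_right Nv Nv')
  have f1: "v \<bullet> w' = s2 * (z \<bullet> w') + (Sg *v w) \<bullet> w'"
    by (subst vz) (simp add: inner_add_left)
  have f2: "v \<bullet> w = s2 * (z \<bullet> w) + (Sg *v w) \<bullet> w"
    by (subst vz) (simp add: inner_add_left)
  have f3: "v \<bullet> w' = s2 * (z' \<bullet> w') + (Sg *v w') \<bullet> w'"
    by (subst vz') (simp add: inner_add_left)
  have f4: "(Sg *v w) \<bullet> w' = (Sg *v w') \<bullet> w"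
    using psd_sym[OF Sg, of w' w] by (simp add: inner_commute)
  have f5: "0 \<le> (Sg *v w') \<bullet> w' - 2 * ((Sg *v w) \<bullet> w') + (Sg *v w) \<bullet> w"
  proof -
    have "0 \<le> (w' - w) \<bullet> (Sg *v (w' - w))" using Sg psd_def by blast
    also have "\<dots> = (Sg *v w') \<bullet> w' - (Sg *v w) \<bullet> w' - (Sg *v w') \<bullet> w + (Sg *v w) \<bullet> w"
      by (simp add: matrix_vector_mult_diff_distrib inner_diff_left inner_diff_right inner_commute)
    finally show ?thesis using f4 by simp
  qed
  have a: "z \<bullet> (M0 xi' *v z) = (\<Sum>i\<in>UNIV. xi'$i * (z$i)^2)" unfolding M0_def by (rule inner_diag)
  have b: "z \<bullet> w' = (\<Sum>i\<in>UNIV. xi'$i * z$i * z'$i)" unfolding w'_def M0_def by (rule inner_diag2)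
  have c: "z' \<bullet> w' = (\<Sum>i\<in>UNIV. xi'$i * (z'$i)^2)" unfolding w'_def M0_def by (rule inner_diag)
  have d: "0 \<le> (\<Sum>i\<in>UNIV. xi'$i * (z$i - z'$i)^2)" using xi' by (intro sum_nonneg) (simp add: nonneg_def)
  have "(\<Sum>i\<in>UNIV. xi'$i * (z$i - z'$i)^2)
      = (\<Sum>i\<in>UNIV. xi'$i * (z$i)^2 - 2 * (xi'$i * z$i * z'$i) + xi'$i * (z'$i)^2)"
    by (rule sum.cong) (simp_all add: power2_diff algebra_simps)
  also have "\<dots> = (\<Sum>i\<in>UNIV. xi'$i * (z$i)^2) - 2 * (\<Sum>i\<in>UNIV. xi'$i * z$i * z'$i) + (\<Sum>i\<in>UNIV. xi'$i * (z'$i)^2)"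
    by (simp add: sum.distrib sum_subtractf sum_distrib_left)
  finally have "0 \<le> z \<bullet> (M0 xi' *v z) - 2 * (z \<bullet> w') + z' \<bullet> w'" using d a b c by simp
  then have "0 \<le> s2 * (z \<bullet> (M0 xi' *v z) - 2 * (z \<bullet> w') + z' \<bullet> w')" using s2 by simp
  then have f6: "0 \<le> s2 * (z \<bullet> (M0 xi' *v z)) - 2 * (s2 * (z \<bullet> w')) + s2 * (z' \<bullet> w')"
    by (simp add: algebra_simps)
  have "v \<bullet> w' - v \<bullet> w \<le> s2 * (z \<bullet> (M0 xi' *v z)) - s2 * (z \<bullet> w)"
    using f1 f2 f3 f5 f6 by linarith
  then show ?thesis unfolding lhs R by (simp add: right_diff_distrib)
qed

lemma N_diff:
  assumes s2: "s2 > 0" and Sg: "psd Sg" and xi: "nonneg xi" and xi': "nonneg xi'"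
  shows "Nm s2 Sg xi' - Nm s2 Sg xi
    = s2 *\<^sub>R (matrix_inv (Bm s2 Sg xi) ** (M0 xi' - M0 xi) ** matrix_inv (Cm s2 Sg xi'))"
proof -
  let ?B = "Bm s2 Sg xi" and ?C' = "Cm s2 Sg xi'" and ?D = "M0 xi" and ?D' = "M0 xi'"
  have iB: "invertible ?B" using Bm_inv[OF s2 Sg xi] .
  have iC': "invertible ?C'" using Cm_inv[OF s2 Sg xi'] .
  have e: "?B ** ?D' - ?D ** ?C' = s2 *\<^sub>R (?D' - ?D)"
    unfolding Bm_def Cm_def
    by (simp add: mm_add_r matrix_add_ldistrib mm_scale_l mm_scale_r matrix_mul_assoc scaleR_diff_right)
  have "s2 *\<^sub>R (matrix_inv ?B ** (?D' - ?D) ** matrix_inv ?C')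
      = matrix_inv ?B ** (s2 *\<^sub>R (?D' - ?D)) ** matrix_inv ?C'"
    by (simp add: mm_scale_l mm_scale_r)
  also have "\<dots> = matrix_inv ?B ** (?B ** ?D' - ?D ** ?C') ** matrix_inv ?C'" by (simp only: e)
  also have "\<dots> = (matrix_inv ?B ** ?B) ** ?D' ** matrix_inv ?C' - matrix_inv ?B ** ?D ** (?C' ** matrix_inv ?C')"
    by (simp add: mm_diff_l mm_diff_r matrix_mul_assoc)
  also have "\<dots> = ?D' ** matrix_inv ?C' - matrix_inv ?B ** ?D" by (simp add: minv_inv iB iC')
  also have "\<dots> = Nm s2 Sg xi' - Nm s2 Sg xi"
  proof -
    have n1: "Nm s2 Sg xi' = ?D' ** matrix_inv ?C'" by (rule N_alt[OF s2 Sg xi'])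
    have n2: "Nm s2 Sg xi = matrix_inv ?B ** ?D" by (simp add: Nm_def)
    show ?thesis by (simp only: n1 n2)
  qed
  finally show ?thesis by simp
qed

lemma est_zero:
  fixes A :: "real^'p^'j" and xi :: "real^'j"
  assumes "estimable A xi" "xi$i = 0" shows "(A *v x)$i = 0"
proof -
  define T where "T = {v::real^'j. \<forall>i. xi$i = 0 \<longrightarrow> v$i = 0}"
  have sT: "subspace T" unfolding T_def subspace_def by auto
  have "columns (M0 xi) \<subseteq> T" unfolding T_def columns_def column_def M0_def diag_mat_def by auto
  then have "span (columns (M0 xi)) \<subseteq> T" using sT by (rule span_minimal)
  then have cA: "columns A \<subseteq> T" using assms(1) estimable_def by blast
  have "A *v x = (\<Sum>k\<in>UNIV. x$k *\<^sub>R column k A)" by (simp add: matrix_mult_sum scalar_mult_eq_scaleR)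
  moreover have "(\<Sum>k\<in>UNIV. x$k *\<^sub>R column k A) \<in> T"
  proof (rule subspace_sum[OF sT])
    fix k have "column k A \<in> T" using cA by (auto simp: columns_def)
    then show "x$k *\<^sub>R column k A \<in> T" by (rule subspace_scale[OF sT])
  qed
  ultimately show ?thesis using assms(2) T_def by auto
qed

lemma Mbeta_pd:
  fixes A :: "real^'p^'j"
  assumes s2: "s2 > 0" and Sg: "psd Sg" and xi: "nonneg xi" and est: "estimable A xi"
  shows "pd (Mbeta s2 Sg A xi)"
  unfolding pd_def Mbeta_eq[OF s2 Sg xi]
proof (intro conjI allI impI)
  show "transpose (transpose A ** Nm s2 Sg xi ** A) = transpose A ** Nm s2 Sg xi ** A"
    by (simp add: matrix_transpose_mul N_sym[OF s2 Sg xi] matrix_mul_assoc)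
  fix x :: "real^'p" assume x0: "x \<noteq> 0"
  define v where "v = A *v x"
  define z where "z = matrix_inv (Cm s2 Sg xi) *v v"
  define w where "w = M0 xi *v z"
  have "v = Cm s2 Sg xi *v z" unfolding z_def
    by (simp add: matrix_vector_mul_assoc minv_inv[OF Cm_inv[OF s2 Sg xi]])
  then have vz: "v = s2 *\<^sub>R z + Sg *v w" unfolding w_def by (simp add: Cm_mv)
  have Nv: "Nm s2 Sg xi *v v = w"
    by (simp add: N_alt[OF s2 Sg xi] z_def w_def matrix_vector_mul_assoc)
  have "x \<bullet> ((transpose A ** Nm s2 Sg xi ** A) *v x) = v \<bullet> w"
  proof -
    have "x \<bullet> ((transpose A ** Nm s2 Sg xi ** A) *v x) = x \<bullet> (transpose A *v (Nm s2 Sg xi *v v))"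
      unfolding v_def by (simp only: matrix_vector_mul_assoc matrix_mul_assoc)
    also have "\<dots> = v \<bullet> (Nm s2 Sg xi *v v)" unfolding v_def by (simp add: inner_mv_transpose)
    finally show ?thesis using Nv by simp
  qed
  moreover have "v \<bullet> w = s2 * (z \<bullet> w) + (Sg *v w) \<bullet> w"
    by (subst vz) (simp add: inner_add_left)
  moreover have q: "z \<bullet> w = (\<Sum>i\<in>UNIV. xi$i * (z$i)^2)" unfolding w_def M0_def by (rule inner_diag)
  moreover have "0 \<le> (Sg *v w) \<bullet> w" using Sg unfolding psd_def by (metis inner_commute)
  moreover have zw0: "0 \<le> z \<bullet> w" unfolding q using xi by (rule diag_quad_nonneg)
  moreover have "z \<bullet> w \<noteq> 0"
  proof
    assume zw: "z \<bullet> w = 0"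
    then have "w = 0" unfolding w_def M0_def using q diag_quad_zero[OF xi] w_def M0_def
      by (metis)
    then have vs: "v = s2 *\<^sub>R z" using vz by simp
    have "v $ i = 0" for i
    proof (cases "xi $ i = 0")
      case True then show ?thesis unfolding v_def using est_zero[OF est] by blast
    next
      case False
      have "w $ i = xi $ i * z $ i" unfolding w_def M0_def by (simp add: mv_diag)
      then have "z $ i = 0" using \<open>w = 0\<close> False by simp
      then show ?thesis using vs by simp
    qed
    then have "A *v x = 0" unfolding v_def by (simp add: vec_eq_iff)
    moreover have "inj ((*v) A)" using est unfolding estimable_def by (simp add: full_rank_injective)
    ultimately show False using x0 by (metis inj_eq matrix_vector_mult_0_right)
  qed
  ultimately show "0 < x \<bullet> ((transpose A ** Nm s2 Sg xi ** A) *v x)" using s2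
    by (smt (verit) mult_pos_pos)
qed


declare transpose_matrix_vector[simp del] vector_transpose_matrix[simp del]

lemma sum_delta_r2: fixes f :: "'n::finite \<Rightarrow> real"
  shows "(\<Sum>k\<in>UNIV. f k * (if k = j then c k else 0)) = f j * c j"
proof -
  have "(\<Sum>k\<in>UNIV. f k * (if k = j then c k else 0)) = (\<Sum>k\<in>UNIV. if k = j then f k * c k else 0)"
    by (rule sum.cong) auto
  then show ?thesis by simp
qed

lemma trace_diag_r: "trace ((X::real^'n^'n) ** diag_mat e) = (\<Sum>k\<in>UNIV. X$k$k * e$k)"
  by (simp add: trace_def diag_mat_def matrix_matrix_mult_def sum_delta_r2)

lemma trace_scale: "trace (k *\<^sub>R (X::real^'n^'n)) = k * trace X"
  by (simp add: trace_def sum_distrib_left)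

lemma psi_eq: "psi s2 Sg A xi j =
   (matrix_inv (Cm s2 Sg xi) ** A ** matrix_inv (Mbeta s2 Sg A xi) ** transpose A ** matrix_inv (Bm s2 Sg xi)) $ j $ j"
  by (simp add: psi_def Cm_def Bm_def M0_def)

lemma trace_psi:
  fixes A :: "real^'p^'j"
  shows "trace (matrix_inv (Mbeta s2 Sg A xi) ** (transpose A ** (matrix_inv (Bm s2 Sg xi) ** diag_mat e ** matrix_inv (Cm s2 Sg xi)) ** A))
    = (\<Sum>j\<in>UNIV. e$j * psi s2 Sg A xi j)"
proof -
  let ?Mi = "matrix_inv (Mbeta s2 Sg A xi)" and ?Bi = "matrix_inv (Bm s2 Sg xi)" and ?Ci = "matrix_inv (Cm s2 Sg xi)"
  have "trace (?Mi ** (transpose A ** (?Bi ** diag_mat e ** ?Ci) ** A))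
      = trace ((?Mi ** transpose A ** ?Bi ** diag_mat e) ** (?Ci ** A))"
    by (simp only: matrix_mul_assoc)
  also have "\<dots> = trace ((?Ci ** A) ** (?Mi ** transpose A ** ?Bi ** diag_mat e))" by (rule trace_mul_sym)
  also have "\<dots> = trace ((?Ci ** A ** ?Mi ** transpose A ** ?Bi) ** diag_mat e)" by (simp only: matrix_mul_assoc)
  also have "\<dots> = (\<Sum>j\<in>UNIV. psi s2 Sg A xi j * e$j)" by (simp add: trace_diag_r psi_eq)
  finally show ?thesis by (simp add: mult.commute)
qed

lemma pd_inv_psd:
  fixes M :: "real^'n^'n"
  assumes "pd M" shows "psd (matrix_inv M)"
proof -
  have iM: "invertible M" using pd_invertible[OF assms] .
  have sM: "transpose M = M" using assms pd_def by blast
  have "transpose (matrix_inv M) = matrix_inv M" using minv_transpose[OF iM] sM by simp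
  moreover have "0 \<le> x \<bullet> (matrix_inv M *v x)" for x
  proof -
    define y where "y = matrix_inv M *v x"
    have "x = M *v y" unfolding y_def by (simp add: matrix_vector_mul_assoc minv_inv[OF iM])
    then have "x \<bullet> (matrix_inv M *v x) = y \<bullet> (M *v y)" unfolding y_def[symmetric] by (simp add: inner_commute)
    moreover have "0 \<le> y \<bullet> (M *v y)" using assms unfolding pd_def by (cases "y = 0") (auto intro: less_imp_le)
    ultimately show ?thesis by simp
  qed
  ultimately show ?thesis unfolding psd_def by blast
qed

lemma if_ineq:
  fixes A :: "real^'p^'j"
  assumes s2: "s2 > 0" and Sg: "psd Sg" and xs: "nonneg xs" and ests: "estimable A xs"
    and xi: "nonneg xi" and esti: "estimable A xi"
  shows "ln (det (Mbeta s2 Sg A xi)) - ln (det (Mbeta s2 Sg A xs))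
     \<le> s2 * (\<Sum>j\<in>UNIV. (xi$j - xs$j) * psi s2 Sg A xs j)"
proof -
  let ?M = "Mbeta s2 Sg A xs" and ?M' = "Mbeta s2 Sg A xi"
  let ?Mi = "matrix_inv ?M"
  let ?N = "Nm s2 Sg xs" and ?N' = "Nm s2 Sg xi"
  let ?X = "matrix_inv (Bm s2 Sg xs) ** (M0 xi - M0 xs) ** matrix_inv (Cm s2 Sg xs)"
  have pdM: "pd ?M" using Mbeta_pd[OF s2 Sg xs ests] .
  have pdM': "pd ?M'" using Mbeta_pd[OF s2 Sg xi esti] .
  have iM: "invertible ?M" using pd_invertible[OF pdM] .
  have 1: "ln (det ?M') - ln (det ?M) \<le> trace (?Mi ** ?M') - real CARD('p)"
    using logdet_ineq[OF pdM pdM'] .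
  have 2: "trace (?Mi ** ?M') - real CARD('p) = trace (?Mi ** (?M' - ?M))"
    by (simp add: mm_diff_l trace_sub minv_inv[OF iM] trace_I)
  have 3: "?M' - ?M = transpose A ** (?N' - ?N) ** A"
    by (simp add: Mbeta_eq[OF s2 Sg xi] Mbeta_eq[OF s2 Sg xs] mm_diff_l mm_diff_r)
  let ?Q = "s2 *\<^sub>R ?X - (?N' - ?N)"
  have 4: "0 \<le> x \<bullet> ((transpose A ** ?Q ** A) *v x)" for x
  proof -
    have "x \<bullet> ((transpose A ** ?Q ** A) *v x) = (A *v x) \<bullet> (?Q *v (A *v x))"
      by (simp only: matrix_vector_mul_assoc[symmetric] inner_mv_transpose transpose_transpose)
    also have "\<dots> = s2 * ((A *v x) \<bullet> (?X *v (A *v x))) - (A *v x) \<bullet> ((?N' - ?N) *v (A *v x))"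
      by (simp add: matrix_vector_mult_diff_rdistrib mv_scale_l inner_diff_right)
    also have "\<dots> \<ge> 0" using quad_key[OF s2 Sg xs xi, of "A *v x"] by simp
    finally show ?thesis .
  qed
  have 5: "0 \<le> trace (?Mi ** (transpose A ** ?Q ** A))"
    using psd_trace[OF pd_inv_psd[OF pdM] 4] .
  have 6: "trace (?Mi ** (transpose A ** ?Q ** A))
      = s2 * trace (?Mi ** (transpose A ** ?X ** A)) - trace (?Mi ** (transpose A ** (?N' - ?N) ** A))"
    by (simp add: mm_diff_l mm_diff_r mm_scale_l mm_scale_r trace_sub trace_scale)
  have 7: "trace (?Mi ** (transpose A ** ?X ** A)) = (\<Sum>j\<in>UNIV. (xi$j - xs$j) * psi s2 Sg A xs j)"
    unfolding M0_def diag_diff using trace_psi[of s2 Sg A xs "xi - xs"] by simp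
  show ?thesis using 1 2 3 5 6 7 by simp
qed


declare transpose_matrix_vector[simp del] vector_transpose_matrix[simp del]

lemma tendsto_mm:
  fixes f :: "'a \<Rightarrow> real^'n^'m" and g :: "'a \<Rightarrow> real^'p^'n"
  assumes "(f \<longlongrightarrow> a) F" "(g \<longlongrightarrow> b) F"
  shows "((\<lambda>t. f t ** g t) \<longlongrightarrow> a ** b) F"
  unfolding matrix_matrix_mult_def
  by (intro tendsto_intros assms)

lemma tendsto_transpose:
  fixes f :: "'a \<Rightarrow> real^'n^'m"
  assumes "(f \<longlongrightarrow> a) F"
  shows "((\<lambda>t. transpose (f t)) \<longlongrightarrow> transpose a) F"
  unfolding transpose_def by (intro tendsto_intros assms)

lemma tendsto_trace:
  fixes f :: "'a \<Rightarrow> real^'n^'n"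
  assumes "(f \<longlongrightarrow> a) F"
  shows "((\<lambda>t. trace (f t)) \<longlongrightarrow> trace a) F"
  unfolding trace_def by (intro tendsto_intros assms)

lemma tendsto_det:
  fixes f :: "'a \<Rightarrow> real^'n^'n"
  assumes "(f \<longlongrightarrow> a) F"
  shows "((\<lambda>t. det (f t)) \<longlongrightarrow> det a) F"
  unfolding det_def by (intro tendsto_intros assms)

lemma tendsto_diag:
  fixes f :: "'a \<Rightarrow> real^'n"
  assumes "(f \<longlongrightarrow> a) F"
  shows "((\<lambda>t. diag_mat (f t)) \<longlongrightarrow> diag_mat a) F"
  unfolding diag_mat_def
proof (intro tendsto_vec_lambda)
  fix i k show "((\<lambda>t. if i = k then f t $ i else 0) \<longlongrightarrow> (if i = k then a $ i else 0)) F"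
    by (cases "i = k") (simp_all add: tendsto_vec_nth assms)
qed

lemma minv_cramer:
  fixes X :: "real^'n^'n"
  assumes "det X \<noteq> 0"
  shows "matrix_inv X = (\<chi> i j. det (\<chi> r c. if c = i then axis j 1 $ r else X $ r $ c) / det X)"
proof -
  have iX: "invertible X" using assms invertible_det_nz by blast
  have "matrix_inv X $ i $ j = det (\<chi> r c. if c = i then axis j 1 $ r else X $ r $ c) / det X" for i j
  proof -
    let ?y = "matrix_inv X *v axis j 1"
    have "X *v ?y = axis j 1" by (simp add: matrix_vector_mul_assoc minv_inv[OF iX])
    then have "?y = (\<chi> k. det (\<chi> r c. if c = k then axis j 1 $ r else X $ r $ c) / det X)"
      using cramer[OF assms] by blast
    then have "?y $ i = det (\<chi> r c. if c = i then axis j 1 $ r else X $ r $ c) / det X" by simp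
    moreover have "?y $ i = matrix_inv X $ i $ j"
      by (simp add: matrix_vector_mult_def axis_def sum_delta_r)
    ultimately show ?thesis by simp
  qed
  then show ?thesis by (simp add: vec_eq_iff)
qed

lemma tendsto_minv:
  fixes f :: "'a \<Rightarrow> real^'n^'n"
  assumes lim: "(f \<longlongrightarrow> a) F" and ia: "invertible a"
  shows "((\<lambda>t. matrix_inv (f t)) \<longlongrightarrow> matrix_inv a) F"
proof -
  have da: "det a \<noteq> 0" using ia invertible_det_nz by blast
  have ev: "eventually (\<lambda>t. det (f t) \<noteq> 0) F"
    using tendsto_imp_eventually_ne[OF tendsto_det[OF lim] da] .
  have col: "((\<lambda>t. (\<chi> r c. if c = i then axis j 1 $ r else f t $ r $ c)) \<longlongrightarrow>
      (\<chi> r c. if c = i then axis j 1 $ r else a $ r $ c)) F" for i j :: 'n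
  proof (intro tendsto_vec_lambda)
    fix r c show "((\<lambda>t. if c = i then axis j 1 $ r else f t $ r $ c) \<longlongrightarrow>
        (if c = i then axis j 1 $ r else a $ r $ c)) F"
      by (cases "c = i") (simp_all add: tendsto_vec_nth lim)
  qed
  have "((\<lambda>t. (\<chi> i j. det (\<chi> r c. if c = i then axis j 1 $ r else f t $ r $ c) / det (f t))) \<longlongrightarrow>
      (\<chi> i j. det (\<chi> r c. if c = i then axis j 1 $ r else a $ r $ c) / det a)) F"
    by (intro tendsto_vec_lambda tendsto_divide tendsto_det col tendsto_det[OF lim] da)
  then have "((\<lambda>t. (\<chi> i j. det (\<chi> r c. if c = i then axis j 1 $ r else f t $ r $ c) / det (f t))) \<longlongrightarrow>
      matrix_inv a) F" by (simp add: minv_cramer[OF da])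
  moreover have "eventually (\<lambda>t. (\<chi> i j. det (\<chi> r c. if c = i then axis j 1 $ r else f t $ r $ c) / det (f t))
      = matrix_inv (f t)) F"
    using ev by eventually_elim (simp add: minv_cramer)
  ultimately show ?thesis by (rule Lim_transform_eventually)
qed


declare transpose_matrix_vector[simp del] vector_transpose_matrix[simp del]

lemma cond_sum:
  fixes p :: "'j::finite \<Rightarrow> real"
  assumes xi: "nonneg xi" and sxi: "(\<Sum>j\<in>UNIV. xi$j) = I" and I: "I > 0"
    and cond: "\<forall>j. p j \<le> (1/I) * (\<Sum>l\<in>UNIV. xs$l * p l)"
  shows "(\<Sum>j\<in>UNIV. (xi$j - xs$j) * p j) \<le> 0"
proof -
  let ?c = "(1/I) * (\<Sum>l\<in>UNIV. xs$l * p l)"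
  have "(\<Sum>j\<in>UNIV. xi$j * p j) \<le> (\<Sum>j\<in>UNIV. xi$j * ?c)"
  proof (rule sum_mono)
    fix j
    have "p j \<le> ?c" using cond by blast
    moreover have "0 \<le> xi$j" using xi by (simp add: nonneg_def)
    ultimately show "xi$j * p j \<le> xi$j * ?c" by (rule mult_left_mono)
  qed
  also have "\<dots> = I * ?c" by (simp only: sum_distrib_right[symmetric] sxi)
  also have "\<dots> = (\<Sum>l\<in>UNIV. xs$l * p l)" using I by simp
  finally show ?thesis by (simp add: left_diff_distrib sum_subtractf)
qed

lemma sum_axis: "(\<Sum>i\<in>UNIV. axis j (1::real) $ i) = 1"
  by (simp add: axis_def)

lemma path_design:
  assumes des: "is_design Itot xs" and t: "0 \<le> t" "t \<le> 1" and I: "Itot > 0"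
  shows "is_design Itot (xs + t *\<^sub>R (Itot *\<^sub>R axis j 1 - xs))"
proof -
  have "0 \<le> (xs + t *\<^sub>R (Itot *\<^sub>R axis j 1 - xs)) $ i" for i
  proof -
    have "(xs + t *\<^sub>R (Itot *\<^sub>R axis j 1 - xs)) $ i = (1 - t) * xs$i + t * (Itot * axis j 1 $ i)"
      by (simp add: algebra_simps)
    moreover have "0 \<le> xs$i" using des by (simp add: is_design_def)
    moreover have "0 \<le> axis j (1::real) $ i" by (simp add: axis_def)
    ultimately show ?thesis using t I by simp
  qed
  moreover have "(\<Sum>i\<in>UNIV. (xs + t *\<^sub>R (Itot *\<^sub>R axis j 1 - xs)) $ i) = Itot"
  proof -
    have "(\<Sum>i\<in>UNIV. (xs + t *\<^sub>R (Itot *\<^sub>R axis j 1 - xs)) $ i)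
        = (\<Sum>i\<in>UNIV. xs$i) + t * (Itot * (\<Sum>i\<in>UNIV. axis j 1 $ i) - (\<Sum>i\<in>UNIV. xs$i))"
      by (simp add: sum.distrib sum_subtractf sum_distrib_left algebra_simps)
    also have "\<dots> = Itot" using des by (simp add: is_design_def sum_axis)
    finally show ?thesis .
  qed
  ultimately show ?thesis by (simp add: is_design_def)
qed

lemma col_M0: "column k (M0 v) = (v$k) *\<^sub>R axis k (1::real)"
  by (simp add: column_def M0_def diag_mat_def axis_def vec_eq_iff)

lemma path_est:
  fixes A :: "real^'p^'j"
  assumes est: "estimable A xs" and xs: "nonneg xs" and I: "Itot > 0" and t: "0 \<le> t" "t < 1"
  shows "estimable A (xs + t *\<^sub>R (Itot *\<^sub>R axis j 1 - xs))"
proof -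
  let ?xt = "xs + t *\<^sub>R (Itot *\<^sub>R axis j 1 - xs)"
  have "columns (M0 xs) \<subseteq> span (columns (M0 ?xt))"
  proof
    fix c assume "c \<in> columns (M0 xs)"
    then obtain k where c: "c = column k (M0 xs)" by (auto simp: columns_def)
    show "c \<in> span (columns (M0 ?xt))"
    proof (cases "xs $ k = 0")
      case True
      then have "c = 0" using c by (simp add: col_M0)
      then show ?thesis by (simp add: span_zero)
    next
      case False
      have "?xt $ k = (1 - t) * xs$k + t * (Itot * axis j 1 $ k)" by (simp add: algebra_simps)
      moreover have "0 \<le> axis j (1::real) $ k" by (simp add: axis_def)
      moreover have "xs $ k > 0"
      proof -
        have "0 \<le> xs$k" using xs by (simp add: nonneg_def)
        then show ?thesis using False by linarith
      qed
      ultimately have pos: "?xt $ k > 0" using t I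
        by (smt (verit) mult_pos_pos mult_nonneg_nonneg)
      have "c = (xs$k / ?xt$k) *\<^sub>R column k (M0 ?xt)" using c pos by (simp add: col_M0)
      moreover have "column k (M0 ?xt) \<in> span (columns (M0 ?xt))"
        by (rule span_base) (auto simp: columns_def)
      ultimately show ?thesis by (simp add: span_scale)
    qed
  qed
  then have "span (columns (M0 xs)) \<subseteq> span (columns (M0 ?xt))" by (rule span_minimal) simp
  then show ?thesis using est unfolding estimable_def by blast
qed

theorem theorem1:
  fixes s2 Itot :: real
    and Sg :: "real^'j::finite^'j"
    and A :: "real^'p::finite^'j"
    and xs :: "real^'j"
  assumes Jp: "CARD('p) \<le> CARD('j)"
    and s2: "s2 > 0"
    and Sg_sym: "transpose Sg = Sg"
    and Sg_nnd: "\<forall>x. 0 \<le> x \<bullet> (Sg *v x)"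
    and Itot: "Itot > 0"
    and des: "is_design Itot xs"
    and est: "estimable A xs"
  shows "(D_optimal s2 Sg A Itot xs \<longleftrightarrow>
            (\<forall>j. psi s2 Sg A xs j \<le> (1 / Itot) * (\<Sum>l\<in>UNIV. xs $ l * psi s2 Sg A xs l)))
       \<and> (D_optimal s2 Sg A Itot xs \<longrightarrow>
            (\<forall>j. xs $ j > 0 \<longrightarrow>
               psi s2 Sg A xs j = (1 / Itot) * (\<Sum>l\<in>UNIV. xs $ l * psi s2 Sg A xs l)))"
proof -
  have Sg: "psd Sg" using Sg_sym Sg_nnd by (simp add: psd_def)
  have xsn: "nonneg xs" using des by (simp add: is_design_def nonneg_def)
  have sxs: "(\<Sum>l\<in>UNIV. xs$l) = Itot" using des by (simp add: is_design_def)
  define c where "c = (1 / Itot) * (\<Sum>l\<in>UNIV. xs $ l * psi s2 Sg A xs l)"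
  have AtoB: "D_optimal s2 Sg A Itot xs" if cond: "\<forall>j. psi s2 Sg A xs j \<le> c"
    unfolding D_optimal_def
  proof (intro conjI allI impI des est)
    fix xi assume h: "is_design Itot xi \<and> estimable A xi"
    have xin: "nonneg xi" using h by (simp add: is_design_def nonneg_def)
    have sxi: "(\<Sum>j\<in>UNIV. xi$j) = Itot" using h by (simp add: is_design_def)
    have "ln (det (Mbeta s2 Sg A xi)) - ln (det (Mbeta s2 Sg A xs))
        \<le> s2 * (\<Sum>j\<in>UNIV. (xi$j - xs$j) * psi s2 Sg A xs j)"
      using if_ineq[OF s2 Sg xsn est xin] h by blast
    moreover have "(\<Sum>j\<in>UNIV. (xi$j - xs$j) * psi s2 Sg A xs j) \<le> 0"
      using cond_sum[OF xin sxi Itot] cond unfolding c_def by blast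
    moreover have "s2 * (\<Sum>j\<in>UNIV. (xi$j - xs$j) * psi s2 Sg A xs j) \<le> 0"
      using calculation(2) s2 by (simp add: mult_nonneg_nonpos)
    ultimately show "ln (det (Mbeta s2 Sg A xi)) \<le> ln (det (Mbeta s2 Sg A xs))" by linarith
  qed
  have BtoA: "psi s2 Sg A xs j \<le> c" if opt: "D_optimal s2 Sg A Itot xs" for j
  proof -
    define d where "d = Itot *\<^sub>R axis j 1 - xs"
    define xt where "xt = (\<lambda>t::real. xs + t *\<^sub>R d)"
    define h where "h = (\<lambda>t. trace (matrix_inv (transpose A ** Nm s2 Sg (xt t) ** A) **
        (transpose A ** (matrix_inv (Bm s2 Sg xs) ** diag_mat d ** matrix_inv (Cm s2 Sg (xt t))) ** A)))"
    have hle: "h t \<le> 0" if t: "0 < t" "t < 1" for t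
    proof -
      have dt: "is_design Itot (xt t)" unfolding xt_def d_def
        using path_design[OF des _ _ Itot] t by simp
      have nt: "nonneg (xt t)" using dt by (simp add: is_design_def nonneg_def)
      have et: "estimable A (xt t)" unfolding xt_def d_def
        using path_est[OF est xsn Itot] t by simp
      have opt_t: "ln (det (Mbeta s2 Sg A (xt t))) \<le> ln (det (Mbeta s2 Sg A xs))"
        using opt dt et unfolding D_optimal_def by blast
      let ?Mt = "Mbeta s2 Sg A (xt t)" and ?M = "Mbeta s2 Sg A xs"
      have pdMt: "pd ?Mt" using Mbeta_pd[OF s2 Sg nt et] .
      have pdM: "pd ?M" using Mbeta_pd[OF s2 Sg xsn est] .
      have iMt: "invertible ?Mt" using pd_invertible[OF pdMt] .
      have L: "ln (det ?M) - ln (det ?Mt) \<le> trace (matrix_inv ?Mt ** ?M) - real CARD('p)"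
        using logdet_ineq[OF pdMt pdM] .
      have L2: "trace (matrix_inv ?Mt ** ?M) - real CARD('p) = - trace (matrix_inv ?Mt ** (?Mt - ?M))"
        by (simp add: mm_diff_l trace_sub minv_inv[OF iMt] trace_I)
      have tr: "trace (matrix_inv ?Mt ** (?Mt - ?M)) \<le> 0" using opt_t L L2 by linarith
      have D: "?Mt - ?M = transpose A ** (Nm s2 Sg (xt t) - Nm s2 Sg xs) ** A"
        by (simp add: Mbeta_eq[OF s2 Sg nt] Mbeta_eq[OF s2 Sg xsn] mm_diff_l mm_diff_r)
      have N: "Nm s2 Sg (xt t) - Nm s2 Sg xs
          = s2 *\<^sub>R (matrix_inv (Bm s2 Sg xs) ** (M0 (xt t) - M0 xs) ** matrix_inv (Cm s2 Sg (xt t)))"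
        using N_diff[OF s2 Sg xsn nt] .
      have E: "M0 (xt t) - M0 xs = t *\<^sub>R diag_mat d"
        by (simp add: M0_def diag_diff xt_def diag_scale)
      have "trace (matrix_inv ?Mt ** (?Mt - ?M)) = trace (matrix_inv ?Mt ** (transpose A **
          (s2 *\<^sub>R (matrix_inv (Bm s2 Sg xs) ** (t *\<^sub>R diag_mat d) ** matrix_inv (Cm s2 Sg (xt t)))) ** A))"
        by (simp only: D N E)
      also have "\<dots> = (s2 * t) * h t"
        unfolding h_def Mbeta_eq[OF s2 Sg nt]
        by (simp add: mm_scale_l mm_scale_r trace_scale)
      finally have "trace (matrix_inv ?Mt ** (?Mt - ?M)) = (s2 * t) * h t" .
      with tr have "(s2 * t) * h t \<le> 0" by simp
      moreover have "s2 * t > 0" using s2 t by simp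
      ultimately show ?thesis using s2 t by (auto simp: mult_le_0_iff)
    qed
    have x0: "xt 0 = xs" by (simp add: xt_def)
    have lim: "(h \<longlongrightarrow> h 0) (at_right 0)"
    proof -
      have x: "(xt \<longlongrightarrow> xt 0) (at_right 0)" unfolding xt_def by (intro tendsto_intros)
      have M0l: "((\<lambda>t. M0 (xt t)) \<longlongrightarrow> M0 (xt 0)) (at_right 0)" unfolding M0_def using x by (rule tendsto_diag)
      have Cl: "((\<lambda>t. Cm s2 Sg (xt t)) \<longlongrightarrow> Cm s2 Sg (xt 0)) (at_right 0)"
        unfolding Cm_def by (intro tendsto_intros tendsto_mm M0l)
      have Bl: "((\<lambda>t. Bm s2 Sg (xt t)) \<longlongrightarrow> Bm s2 Sg (xt 0)) (at_right 0)"
        unfolding Bm_def by (intro tendsto_intros tendsto_mm M0l)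
      have Cil: "((\<lambda>t. matrix_inv (Cm s2 Sg (xt t))) \<longlongrightarrow> matrix_inv (Cm s2 Sg (xt 0))) (at_right 0)"
        by (rule tendsto_minv[OF Cl]) (simp add: x0 Cm_inv[OF s2 Sg xsn])
      have Bil: "((\<lambda>t. matrix_inv (Bm s2 Sg (xt t))) \<longlongrightarrow> matrix_inv (Bm s2 Sg (xt 0))) (at_right 0)"
        by (rule tendsto_minv[OF Bl]) (simp add: x0 Bm_inv[OF s2 Sg xsn])
      have Nl: "((\<lambda>t. Nm s2 Sg (xt t)) \<longlongrightarrow> Nm s2 Sg (xt 0)) (at_right 0)"
        unfolding Nm_def by (intro tendsto_mm Bil M0l)
      have MMl: "((\<lambda>t. transpose A ** Nm s2 Sg (xt t) ** A) \<longlongrightarrow> transpose A ** Nm s2 Sg (xt 0) ** A) (at_right 0)"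
        by (intro tendsto_mm tendsto_const Nl)
      have "invertible (transpose A ** Nm s2 Sg (xt 0) ** A)"
        unfolding x0 Mbeta_eq[OF s2 Sg xsn, symmetric] by (rule pd_invertible[OF Mbeta_pd[OF s2 Sg xsn est]])
      from tendsto_minv[OF MMl this]
      have Mil: "((\<lambda>t. matrix_inv (transpose A ** Nm s2 Sg (xt t) ** A)) \<longlongrightarrow>
          matrix_inv (transpose A ** Nm s2 Sg (xt 0) ** A)) (at_right 0)" .
      show ?thesis unfolding h_def by (intro tendsto_trace tendsto_mm tendsto_const Mil Cil)
    qed
    have ev: "eventually (\<lambda>t. h t \<le> 0) (at_right 0)"
    proof -
      have "eventually (\<lambda>x. x \<in> {0<..<1}) (at_right (0::real))" by (rule eventually_at_right_real) simp
      then show ?thesis by eventually_elim (simp add: hle)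
    qed
    have h0: "h 0 \<le> 0" using tendsto_upperbound[OF lim ev] by simp
    have "h 0 = (\<Sum>l\<in>UNIV. d$l * psi s2 Sg A xs l)"
      unfolding h_def x0 Mbeta_eq[OF s2 Sg xsn, symmetric] by (rule trace_psi)
    also have "\<dots> = Itot * psi s2 Sg A xs j - (\<Sum>l\<in>UNIV. xs$l * psi s2 Sg A xs l)"
    proof -
      have "(\<Sum>l\<in>UNIV. d$l * psi s2 Sg A xs l)
          = (\<Sum>l\<in>UNIV. Itot * (axis j 1 $ l * psi s2 Sg A xs l)) - (\<Sum>l\<in>UNIV. xs$l * psi s2 Sg A xs l)"
        by (simp add: d_def left_diff_distrib sum_subtractf mult.assoc)
      also have "(\<Sum>l\<in>UNIV. Itot * (axis j 1 $ l * psi s2 Sg A xs l)) = Itot * psi s2 Sg A xs j"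
      proof -
        have "(\<Sum>l\<in>UNIV. axis j (1::real) $ l * psi s2 Sg A xs l) = (\<Sum>l\<in>UNIV. if l = j then psi s2 Sg A xs l else 0)"
          by (rule sum.cong) (auto simp: axis_def)
        then have "(\<Sum>l\<in>UNIV. axis j (1::real) $ l * psi s2 Sg A xs l) = psi s2 Sg A xs j" by simp
        then show ?thesis by (simp add: sum_distrib_left[symmetric])
      qed
      finally show ?thesis .
    qed
    finally have "Itot * psi s2 Sg A xs j \<le> (\<Sum>l\<in>UNIV. xs$l * psi s2 Sg A xs l)" using h0 by simp
    then show ?thesis unfolding c_def using Itot by (simp add: field_simps)
  qed
  have Eq: "psi s2 Sg A xs j = c" if opt: "D_optimal s2 Sg A Itot xs" and pos: "xs $ j > 0" for j
  proof -
    have ge: "0 \<le> xs$l * (c - psi s2 Sg A xs l)" for l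
      using BtoA[OF opt, of l] xsn by (simp add: nonneg_def)
    have cs: "(\<Sum>l\<in>UNIV. c * xs$l) = c * Itot" by (simp only: sum_distrib_left[symmetric] sxs)
    have "(\<Sum>l\<in>UNIV. xs$l * (c - psi s2 Sg A xs l)) = (\<Sum>l\<in>UNIV. c * xs$l - xs$l * psi s2 Sg A xs l)"
      by (rule sum.cong) (simp_all add: algebra_simps)
    also have "\<dots> = (\<Sum>l\<in>UNIV. c * xs$l) - (\<Sum>l\<in>UNIV. xs$l * psi s2 Sg A xs l)" by (rule sum_subtractf)
    also have "\<dots> = c * Itot - (\<Sum>l\<in>UNIV. xs$l * psi s2 Sg A xs l)" by (simp only: cs)
    also have "\<dots> = 0" unfolding c_def using Itot by simp
    finally have "\<forall>l\<in>UNIV. xs$l * (c - psi s2 Sg A xs l) = 0"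
      using ge by (subst sum_nonneg_eq_0_iff[symmetric]) auto
    then have "xs$j * (c - psi s2 Sg A xs j) = 0" by blast
    then show ?thesis using pos by simp
  qed
  show ?thesis using AtoB BtoA Eq unfolding c_def[symmetric] by blast
qed


end
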